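(* Let $\varepsilon\in(0,1)$ and let $\tau,\alpha,f_0,g$ be as defined in the context. If $n$ is sufficiently large, then for every $x\in\{0,1\}^n$ with $f(x)<f_0$, \[E[g(\mathcal{M}(x))]\le 2.\]
   Context: $f$ is OneMax, $f(x)=\sum_i x_i$. $\mathcal{M}$ is standard bit mutation: $\mathcal{M}(x)$ flips each bit of $x$ independently with probability $1/n$. Potential function: $\tau=\frac{4e}{\varepsilon}$, $\alpha=1-\frac1\tau\ln\big(1+\frac1\tau\big)$, $f_0=\lceil\alpha n\rceil$, and $g(x)=\tau^{f(x)-f_0}$ if $f(x)\ge f_0$ and $g(x)=0$ otherwise. *)

theory Defs
  imports "HOL-Probability.Probability"
begin

definition onemax :: "bool list \<Rightarrow> nat" where
  "onemax x = length (filter id x)"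

definition std_mut :: "bool list \<Rightarrow> bool list pmf" where
  "std_mut x = map_pmf (\<lambda>F. map (\<lambda>i. x ! i \<noteq> F i) [0..<length x])
      (Pi_pmf {..<length x} False (\<lambda>_. bernoulli_pmf (1 / real (length x))))"

definition tau :: "real \<Rightarrow> real" where
  "tau \<epsilon> = 4 * exp 1 / \<epsilon>"

definition alpha :: "real \<Rightarrow> real" where
  "alpha \<epsilon> = 1 - (1 / tau \<epsilon>) * ln (1 + 1 / tau \<epsilon>)"

definition f0 :: "real \<Rightarrow> nat \<Rightarrow> int" where
  "f0 \<epsilon> n = \<lceil>alpha \<epsilon> * real n\<rceil>"

definition pot :: "real \<Rightarrow> nat \<Rightarrow> bool list \<Rightarrow> real" where
  "pot \<epsilon> n x = (if int (onemax x) \<ge> f0 \<epsilon> n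
                 then tau \<epsilon> powi (int (onemax x) - f0 \<epsilon> n) else 0)"

end

theory Submission
  imports Defs
begin

lemma onemax_map:
  fixes t :: real
  shows "t ^ onemax (map (\<lambda>i. x ! i \<noteq> F i) [0..<length x]) =
         (\<Prod>i\<in>{..<length x}. (if x ! i \<noteq> F i then t else 1))"
proof -
  have "onemax (map (\<lambda>i. x ! i \<noteq> F i) [0..<length x]) = card {i. i < length x \<and> x ! i \<noteq> F i}"
    unfolding onemax_def by (auto simp: length_filter_conv_card intro!: arg_cong[where f=card])
  moreover have "(\<Prod>i\<in>{..<length x}. (if x ! i \<noteq> F i then t else 1)) = t ^ card ({..<length x} \<inter> {i. x ! i \<noteq> F i})"
    by (simp add: prod.If_cases)
  moreover have "{..<length x} \<inter> {i. x ! i \<noteq> F i} = {i. i < length x \<and> x ! i \<noteq> F i}" by auto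
  ultimately show ?thesis by simp
qed

lemma exp_bound:
  fixes t :: real
  assumes t: "t \<ge> 1" and n: "length x \<ge> 1"
  shows "measure_pmf.expectation (std_mut x) (\<lambda>y. t ^ onemax y)
     \<le> t ^ onemax x * (1 + (t - 1) / real (length x)) ^ (length x - onemax x)"
proof -
  define n where "n = length x"
  define p where "p = 1 / real n"
  define q where "q = 1 + (t - 1) / real n"
  have p0: "0 \<le> p" "p \<le> 1" using n unfolding p_def n_def by (auto simp: divide_le_eq_1)
  have "measure_pmf.expectation (std_mut x) (\<lambda>y. t ^ onemax y) =
     measure_pmf.expectation (Pi_pmf {..<n} False (\<lambda>_. bernoulli_pmf p))
        (\<lambda>F. \<Prod>i\<in>{..<n}. (if x ! i \<noteq> F i then t else 1))"
    unfolding std_mut_def p_def n_def integral_map_pmf onemax_map ..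
  also have "\<dots> = (\<Prod>i\<in>{..<n}. measure_pmf.expectation (bernoulli_pmf p)
        (\<lambda>v. if x ! i \<noteq> v then t else 1))"
    by (rule expectation_prod_Pi_pmf) (use t in \<open>auto intro: integrable_measure_pmf_finite\<close>)
  also have "\<dots> = (\<Prod>i\<in>{..<n}. (if x ! i \<noteq> True then t else 1) * p + (if x ! i \<noteq> False then t else 1) * (1 - p))"
    using p0 by simp
  also have "\<dots> \<le> (\<Prod>i\<in>{..<n}. (if x ! i then t else q))"
  proof (rule prod_mono)
    fix i assume "i \<in> {..<n}"
    have h1: "p * (t - 1) = (t - 1) / real n" unfolding p_def by simp
    have h2: "p * t \<le> t" using p0 t by (intro mult_left_le_one_le) auto
    have h3: "0 \<le> p * (t - 1)" using p0 t by simp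
    show "0 \<le> (if x ! i \<noteq> True then t else 1) * p + (if x ! i \<noteq> False then t else 1) * (1 - p) \<and>
          (if x ! i \<noteq> True then t else 1) * p + (if x ! i \<noteq> False then t else 1) * (1 - p) \<le> (if x ! i then t else q)"
      using p0 t h1 h2 h3 unfolding q_def by (cases "x ! i") (auto simp: algebra_simps)
  qed
  also have "\<dots> = t ^ card ({..<n} \<inter> {i. x ! i}) * q ^ card ({..<n} \<inter> - {i. x ! i})"
    by (simp add: prod.If_cases)
  also have "card ({..<n} \<inter> {i. x ! i}) = onemax x"
  proof -
    have "{..<n} \<inter> {i. x ! i} = {i. i < length x \<and> id (x ! i)}" unfolding n_def by auto
    then show ?thesis unfolding onemax_def by (simp add: length_filter_conv_card)
  qed
  also have "card ({..<n} \<inter> - {i. x ! i}) = n - onemax x"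
  proof -
    have "{..<n} \<inter> - {i. x ! i} = {..<n} - ({..<n} \<inter> {i. x ! i})" by auto
    then have "card ({..<n} \<inter> - {i. x ! i}) = n - card ({..<n} \<inter> {i. x ! i})"
      by (simp add: card_Diff_subset)
    with \<open>card ({..<n} \<inter> {i. x ! i}) = onemax x\<close> show ?thesis by simp
  qed
  finally show ?thesis unfolding q_def n_def .
qed

lemma final_ineq:
  fixes t a :: real and k F n :: nat
  assumes t: "t > 1" and n: "n \<ge> 1" and kF: "k < F" and Fn: "F \<le> n"
    and aF: "a * real n \<le> real F" and ta: "t * (1 - a) = ln (1 + 1 / t)" and a1: "a \<le> 1"
  shows "t ^ k * (1 + (t - 1) / real n) ^ (n - k) / t ^ F \<le> 2"
proof -
  define q where "q = 1 + (t - 1) / real n"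
  have q1: "1 \<le> q" using t n unfolding q_def by auto
  have qt: "q \<le> t"
  proof -
    have "(t - 1) / real n \<le> t - 1" using t n by (simp add: divide_le_eq)
    then show ?thesis unfolding q_def by simp
  qed
  have "0 < 1 / t" using t by simp
  then have pos: "0 < 1 + 1 / t" by linarith
  have e1: "n - k = (n - F) + (F - k)" using kF Fn by simp
  have e2: "t ^ F = t ^ k * t ^ (F - k)" using kF by (simp flip: power_add)
  have tp: "t ^ k > 0" "t ^ (F - k) > 0" using t by auto
  have "t ^ k * q ^ (n - k) / t ^ F = q ^ (n - F) * (q ^ (F - k) / t ^ (F - k))"
  proof -
    have "t ^ k * q ^ (n - k) / t ^ F = (t ^ k * q ^ (n - F) * q ^ (F - k)) / (t ^ k * t ^ (F - k))"
      by (simp only: e2) (simp add: e1 power_add mult.assoc)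
    also have "\<dots> = q ^ (n - F) * (q ^ (F - k) / t ^ (F - k))" using tp by (simp only: mult.assoc mult_divide_mult_cancel_left[OF order.strict_implies_not_eq[OF tp(1), symmetric]] times_divide_eq_right)
    finally show ?thesis .
  qed
  also have "\<dots> \<le> q ^ (n - F) * 1"
  proof (rule mult_left_mono)
    show "q ^ (F - k) / t ^ (F - k) \<le> 1" using tp q1 qt by (simp add: power_mono)
    show "0 \<le> q ^ (n - F)" using q1 by simp
  qed
  also have "q ^ (n - F) \<le> exp ((t - 1) / real n) ^ (n - F)"
    using q1 unfolding q_def by (intro power_mono) (auto simp: exp_ge_add_one_self add.commute)
  also have "\<dots> = exp (real (n - F) * ((t - 1) / real n))" by (simp only: exp_of_nat_mult)
  also have "\<dots> \<le> exp (t * (1 - a))"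
  proof -
    have h: "real (n - F) / real n \<le> 1 - a"
    proof -
      have "real (n - F) / real n = 1 - real F / real n" using n Fn by (simp add: of_nat_diff diff_divide_distrib)
      moreover have "a \<le> real F / real n" using aF n by (simp add: le_divide_eq)
      ultimately show ?thesis by linarith
    qed
    have h0: "0 \<le> real (n - F) / real n" by simp
    have "real (n - F) * ((t - 1) / real n) = (t - 1) * (real (n - F) / real n)" by simp
    also have "\<dots> \<le> t * (real (n - F) / real n)" using h0 by (intro mult_right_mono) auto
    also have "\<dots> \<le> t * (1 - a)" using h t by (intro mult_left_mono) auto
    finally show ?thesis by simp
  qed
  also have "\<dots> = 1 + 1 / t" using ta pos by simp
  also have "\<dots> \<le> 2" using t by simp
  finally show ?thesis unfolding q_def by simp
qed

theorem lemma5: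
  fixes \<epsilon> :: real
  assumes "0 < \<epsilon>" and "\<epsilon> < 1"
  shows "\<exists>N. \<forall>n \<ge> N. \<forall>x :: bool list. length x = n \<longrightarrow> int (onemax x) < f0 \<epsilon> n \<longrightarrow>
           measure_pmf.expectation (std_mut x) (pot \<epsilon> n) \<le> 2"
proof (intro exI allI impI)
  fix n :: nat and x :: "bool list"
  assume len: "length x = n" and lt: "int (onemax x) < f0 \<epsilon> n"
  define t where "t = tau \<epsilon>"
  define a where "a = alpha \<epsilon>"
  have t1: "t > 1"
  proof -
    have "4 * exp 1 > (1::real)" using exp_ge_add_one_self[of 1] by simp
    also have "4 * exp 1 \<le> 4 * exp 1 / \<epsilon>" using assms by (simp add: le_divide_eq)
    finally show ?thesis unfolding t_def tau_def .
  qed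
  have ta: "t * (1 - a) = ln (1 + 1 / t)" using t1 unfolding a_def alpha_def t_def[symmetric] by simp
  have lnpos: "ln (1 + 1 / t) \<ge> 0" using t1 by simp
  have a1: "a \<le> 1"
  proof -
    have "0 \<le> t * (1 - a)" using ta lnpos by simp
    then show ?thesis using t1 by (simp add: zero_le_mult_iff)
  qed
  define F where "F = nat (f0 \<epsilon> n)"
  have f0F: "f0 \<epsilon> n = int F" using lt unfolding F_def by simp
  have aF: "a * real n \<le> real F"
    using f0F unfolding f0_def a_def by (metis le_of_int_ceiling of_int_of_nat_eq)
  have Fn: "F \<le> n"
  proof -
    have "a * real n \<le> 1 * real n" using a1 by (intro mult_right_mono) auto
    then have "\<lceil>a * real n\<rceil> \<le> int n" by (simp add: ceiling_le_iff)
    then show ?thesis using f0F unfolding f0_def a_def by simp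
  qed
  have kF: "onemax x < F" using lt f0F by simp
  have n1: "n \<ge> 1" using kF Fn by simp
  have fin: "finite (set_pmf (std_mut x))"
  proof (rule finite_subset)
    show "set_pmf (std_mut x) \<subseteq> {ys. set ys \<subseteq> UNIV \<and> length ys = n}"
      unfolding std_mut_def using len by auto
    show "finite {ys. set ys \<subseteq> (UNIV :: bool set) \<and> length ys = n}"
      by (rule finite_lists_length_eq) simp
  qed
  have pb: "pot \<epsilon> n y \<le> t ^ onemax y / t ^ F" for y
  proof (cases "int (onemax y) \<ge> f0 \<epsilon> n")
    case True
    then have Fy: "F \<le> onemax y" using f0F by simp
    then have e1: "t ^ onemax y / t ^ F = t ^ (onemax y - F)" using t1
      by (simp add: power_diff)
    have e2: "int (onemax y) - f0 \<epsilon> n = int (onemax y - F)" using Fy f0F by simp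
    have "pot \<epsilon> n y = t powi int (onemax y - F)"
      unfolding pot_def t_def[symmetric] using True by (simp only: e2 if_True)
    also have "\<dots> = t ^ (onemax y - F)" by (rule power_int_of_nat)
    finally show ?thesis using e1 by simp
  next
    case False
    then have "pot \<epsilon> n y = 0" unfolding pot_def by simp
    moreover have "0 \<le> t ^ onemax y / t ^ F" using t1 by simp
    ultimately show ?thesis by simp
  qed
  have "measure_pmf.expectation (std_mut x) (pot \<epsilon> n)
      \<le> measure_pmf.expectation (std_mut x) (\<lambda>y. t ^ onemax y / t ^ F)"
    by (rule integral_mono) (use fin pb in \<open>auto intro: integrable_measure_pmf_finite\<close>)
  also have "\<dots> = measure_pmf.expectation (std_mut x) (\<lambda>y. t ^ onemax y) / t ^ F"
    by simp
  also have "\<dots> \<le> t ^ onemax x * (1 + (t - 1) / real n) ^ (n - onemax x) / t ^ F"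
    using exp_bound[of t x] t1 n1 len by (simp add: divide_right_mono)
  also have "\<dots> \<le> 2"
    by (rule final_ineq) (use t1 n1 kF Fn aF ta a1 in auto)
  finally show "measure_pmf.expectation (std_mut x) (pot \<epsilon> n) \<le> 2" .
qed

end
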